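(* Consider the partial-block protocol without direct messaging described in the context, on a finite set of agents $A$ with a connected undirected connectivity graph $G=(A,E)$, and suppose the block length is $L=\Delta(G)+1$, where $\Delta(G)$ is the maximum degree of $G$. Then a deadlock never occurs: for every epoch $t$ it is not the case that $D(i)$ holds for all $i\in A$.
   Context: Let $A$ be a finite set of agents (agent IDs) and $G=(A,E)$ a connected undirected graph; $\Gamma_i$ denotes the set of neighbors of $i$ and $\Delta(G)$ the maximum vertex degree. Fix an integer $L\ge 1$ (block length). Each agent $i$ maintains a partial block $pb_i\subseteq A$ (a set of agent IDs). The system runs in epochs $t=0,1,2,\dots$; $pb_i^{(t)}$ is agent $i$'s partial block at the start of epoch $t$. In each epoch: (C1) every agent $i$ with $i\notin pb_i$ adds $i$ to $pb_i$; (C2) every agent $i$ sends its $pb_i$ to every neighbor $j\in\Gamma_i$. When an agent $i$ receives a partial block $P$ from a neighbor it applies the rule: if $|P\setminus\{i\}|>|pb_i\setminus\{i\}|$, agent $i$ sets $pb_i:=P$; otherwise the received block is discarded (in particular, there is no direct messaging to non-neighbors). All received partial blocks are assumed to pass all validity and similarity checks. For an agent $i$ and epoch $t$, the predicate $D(i)$ means: $pb_i^{(t)}=pb_i^{(t+1)}$ and $|pb_i^{(t)}|<L$. A deadlock at epoch $t$ means that $D(i)$ holds for all $i\in A$. *)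

theory Defs
  imports Main
begin

definition neighbors :: "('a \<Rightarrow> 'a \<Rightarrow> bool) \<Rightarrow> 'a \<Rightarrow> 'a set" where
  "neighbors E i = {j. E i j}"

definition max_degree :: "'a set \<Rightarrow> ('a \<Rightarrow> 'a \<Rightarrow> bool) \<Rightarrow> nat" where
  "max_degree A E = Max ((\<lambda>i. card (neighbors E i)) ` A)"

definition connected_undirected_graph :: "'a set \<Rightarrow> ('a \<Rightarrow> 'a \<Rightarrow> bool) \<Rightarrow> bool" where
  "connected_undirected_graph A E \<longleftrightarrow>
     finite A \<and> A \<noteq> {} \<and>
     (\<forall>i j. E i j \<longrightarrow> i \<in> A \<and> j \<in> A) \<and>
     (\<forall>i j. E i j \<longrightarrow> E j i) \<and>
     (\<forall>i. \<not> E i i) \<and>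
     (\<forall>i\<in>A. \<forall>j\<in>A. (i, j) \<in> {(x, y). E x y}\<^sup>*)"

definition recv :: "'a \<Rightarrow> 'a set \<Rightarrow> 'a set \<Rightarrow> 'a set" where
  "recv i P cur = (if card (cur - {i}) < card (P - {i}) then P else cur)"

(* One epoch: (C1) every agent adds itself; (C2) every agent sends its block
   (after C1) to all neighbours; each agent processes the received blocks one
   by one, in some arbitrary order of its neighbours. *)
definition epoch_step :: "'a set \<Rightarrow> ('a \<Rightarrow> 'a \<Rightarrow> bool) \<Rightarrow> ('a \<Rightarrow> 'a set) \<Rightarrow> ('a \<Rightarrow> 'a set) \<Rightarrow> bool" where
  "epoch_step A E s s' \<longleftrightarrow>
     (\<forall>i\<in>A. \<exists>xs. distinct xs \<and> set xs = neighbors E i \<and>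
        s' i = fold (\<lambda>j cur. recv i (insert j (s j)) cur) xs (insert i (s i)))"

definition execution :: "'a set \<Rightarrow> ('a \<Rightarrow> 'a \<Rightarrow> bool) \<Rightarrow> (nat \<Rightarrow> 'a \<Rightarrow> 'a set) \<Rightarrow> bool" where
  "execution A E pb \<longleftrightarrow> (\<forall>i\<in>A. pb 0 i = {}) \<and> (\<forall>t. epoch_step A E (pb t) (pb (Suc t)))"

definition D :: "nat \<Rightarrow> (nat \<Rightarrow> 'a \<Rightarrow> 'a set) \<Rightarrow> nat \<Rightarrow> 'a \<Rightarrow> bool" where
  "D L pb t i \<longleftrightarrow> pb t i = pb (Suc t) i \<and> card (pb t i) < L"

definition deadlock :: "'a set \<Rightarrow> nat \<Rightarrow> (nat \<Rightarrow> 'a \<Rightarrow> 'a set) \<Rightarrow> nat \<Rightarrow> bool" where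
  "deadlock A L pb t \<longleftrightarrow> (\<forall>i\<in>A. D L pb t i)"

end

theory Submission
  imports Defs
begin

lemma fold_recv_mem:
  "fold (\<lambda>j cur. recv i (f j) cur) xs c \<in> insert c (f ` set xs)"
  by (induction xs arbitrary: c) (auto simp: recv_def)

lemma fold_recv_mono:
  "card (c - {i}) \<le> card (fold (\<lambda>j cur. recv i (f j) cur) xs c - {i})"
  by (induction xs arbitrary: c) (auto simp: recv_def intro: le_trans less_imp_le)

lemma fold_recv_ge:
  "j \<in> set xs \<Longrightarrow> card (f j - {i}) \<le> card (fold (\<lambda>j cur. recv i (f j) cur) xs c - {i})"
proof (induction xs arbitrary: c)
  case Nil then show ?case by simp
next
  case (Cons x xs)
  show ?case
  proof (cases "j = x")
    case True
    have "card (f j - {i}) \<le> card (recv i (f x) c - {i})"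
      using True by (simp add: recv_def)
    also have "\<dots> \<le> card (fold (\<lambda>j cur. recv i (f j) cur) xs (recv i (f x) c) - {i})"
      by (rule fold_recv_mono)
    finally show ?thesis by simp
  next
    case False
    then show ?thesis using Cons by simp
  qed
qed

lemma fold_recv_same:
  "card (fold (\<lambda>j cur. recv i (f j) cur) xs c - {i}) \<le> card (c - {i})
   \<Longrightarrow> fold (\<lambda>j cur. recv i (f j) cur) xs c = c"
proof (induction xs arbitrary: c)
  case Nil then show ?case by simp
next
  case (Cons x xs)
  show ?case
  proof (cases "card (c - {i}) < card (f x - {i})")
    case True
    have "card (f x - {i}) \<le> card (fold (\<lambda>j cur. recv i (f j) cur) xs (f x) - {i})"
      by (rule fold_recv_mono)
    then show ?thesis using Cons.prems True by (simp add: recv_def)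
  next
    case False
    then show ?thesis using Cons by (simp add: recv_def)
  qed
qed

lemma pb_subset:
  assumes g: "connected_undirected_graph A E" and ex: "execution A E pb"
  shows "i \<in> A \<Longrightarrow> pb t i \<subseteq> A"
proof (induction t arbitrary: i)
  case 0 then show ?case using ex by (simp add: execution_def)
next
  case (Suc t)
  from ex Suc.prems obtain xs where xs: "distinct xs" "set xs = neighbors E i"
    "pb (Suc t) i = fold (\<lambda>j cur. recv i (insert j (pb t j)) cur) xs (insert i (pb t i))"
    unfolding execution_def epoch_step_def by blast
  have nA: "\<And>j. j \<in> set xs \<Longrightarrow> j \<in> A" using xs(2) g
    by (auto simp: neighbors_def connected_undirected_graph_def)
  have "pb (Suc t) i \<in> insert (insert i (pb t i)) ((\<lambda>j. insert j (pb t j)) ` set xs)"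
    unfolding xs(3) by (rule fold_recv_mem)
  moreover have "pb t i \<subseteq> A" using Suc.IH Suc.prems by blast
  moreover have "pb t j \<subseteq> A" if "j \<in> set xs" for j using Suc.IH nA that by blast
  ultimately show ?case using Suc.prems nA by (auto, meson subsetD)
qed

theorem theorem2:
  fixes A :: "'a set" and E :: "'a \<Rightarrow> 'a \<Rightarrow> bool" and pb :: "nat \<Rightarrow> 'a \<Rightarrow> 'a set" and L :: nat
  assumes "connected_undirected_graph A E"
    and "L = max_degree A E + 1"
    and "execution A E pb"
  shows "\<forall>t. \<not> deadlock A L pb t"
proof (intro allI notI)
  fix t assume dl: "deadlock A L pb t"
  note g = assms(1)
  have finA: "finite A" and neA: "A \<noteq> {}" using g by (auto simp: connected_undirected_graph_def)
  have nbA: "\<And>i. neighbors E i \<subseteq> A" using g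
    by (auto simp: neighbors_def connected_undirected_graph_def)
  have irr: "\<And>i. i \<notin> neighbors E i" using g
    by (auto simp: neighbors_def connected_undirected_graph_def)
  have fin: "\<And>i. i \<in> A \<Longrightarrow> finite (pb t i)"
    using pb_subset[OF g assms(3)] finA finite_subset by blast
  have fx: "pb (Suc t) i = pb t i" "card (pb t i) < L" if "i \<in> A" for i
    using dl that by (auto simp: deadlock_def D_def)
  have step: "\<exists>xs. set xs = neighbors E i \<and>
        pb t i = fold (\<lambda>j cur. recv i (insert j (pb t j)) cur) xs (insert i (pb t i))"
    if "i \<in> A" for i
    using assms(3) that fx(1)[OF that] unfolding execution_def epoch_step_def by metis
  have self: "i \<in> pb t i" if iA0: "i \<in> A" for i
  proof -
    obtain xs where xs: "set xs = neighbors E i"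
      "pb t i = fold (\<lambda>j cur. recv i (insert j (pb t j)) cur) xs (insert i (pb t i))"
      using step[OF iA0] by blast
    have "card (fold (\<lambda>j cur. recv i (insert j (pb t j)) cur) xs (insert i (pb t i)) - {i})
        \<le> card (insert i (pb t i) - {i})"
      using xs(2)[symmetric] by simp
    from fold_recv_same[OF this] xs(2) have "insert i (pb t i) = pb t i" by simp
    then show ?thesis by blast
  qed
  have ge: "card (pb t j - {i}) \<le> card (pb t i - {i})" if iA1: "i \<in> A" "j \<in> neighbors E i" for i j
  proof -
    obtain xs where xs: "set xs = neighbors E i"
      "pb t i = fold (\<lambda>j cur. recv i (insert j (pb t j)) cur) xs (insert i (pb t i))"
      using step[OF iA1(1)] by blast
    have jA: "j \<in> A" using nbA that(2) by blast
    have "card (insert j (pb t j) - {i}) \<le> card (pb t i - {i})"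
      using fold_recv_ge[of j xs "\<lambda>j. insert j (pb t j)" i "insert i (pb t i)"] xs that(2)
      by simp
    then show ?thesis using self[OF jA] by (simp add: insert_absorb)
  qed
  have nb_in: "j \<in> pb t i" if "i \<in> A" "j \<in> neighbors E i" for i j
  proof (rule ccontr)
    assume nj: "j \<notin> pb t i"
    have jA: "j \<in> A" using nbA that(2) by blast
    have ij: "i \<in> neighbors E j" using g that(2)
      by (auto simp: neighbors_def connected_undirected_graph_def)
    have ij': "i \<noteq> j" using irr that(2) by blast
    have c1: "card (pb t j - {i}) \<le> card (pb t i) - 1"
      using ge[OF that] self[OF that(1)] fin[OF that(1)] by simp
    have c2: "card (pb t i) \<le> card (pb t j) - 1"
      using ge[OF jA ij] self[OF jA] fin[OF jA] nj by simp
    have c3: "card (pb t j) - 1 \<le> card (pb t j - {i})"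
      using fin[OF jA] by (metis card_Diff_singleton_if diff_le_self order_refl)
    have c4: "card (pb t i) \<ge> 1" using self[OF that(1)] fin[OF that(1)]
      by (metis One_nat_def Suc_leI card_gt_0_iff empty_iff)
    have c5: "card (pb t j) \<ge> 1" using self[OF jA] fin[OF jA]
      by (metis One_nat_def Suc_leI card_gt_0_iff empty_iff)
    show False using c1 c2 c3 c4 c5 by linarith
  qed
  let ?S = "(\<lambda>i. card (neighbors E i)) ` A"
  have "max_degree A E \<in> ?S" unfolding max_degree_def
    using finA neA by (intro Max_in) auto
  then obtain i where iA: "i \<in> A" and di: "max_degree A E = card (neighbors E i)" by auto
  have sub: "insert i (neighbors E i) \<subseteq> pb t i" using self[OF iA] nb_in[OF iA] by blast
  have "card (insert i (neighbors E i)) = card (neighbors E i) + 1"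
    using irr[of i] finite_subset[OF nbA finA] by simp
  moreover have "card (insert i (neighbors E i)) \<le> card (pb t i)"
    using sub fin[OF iA] by (rule card_mono[rotated])
  ultimately show False using fx(2)[OF iA] assms(2) di by linarith
qed

end
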